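(* In the standing setting, let $(A,B,R,\sigma)$ be a normalized context. If $\mathcal{FC}\neq\varnothing$, then there exists a family $\{(g_i,f_i)\}_{i\in I}\subseteq\mathcal{FC}$ such that $B=\bigcup_{i\in I}B_i^\top$ with $B_i^\top\cap B_j^\top=\varnothing$ for all $i\ne j$; $B=\bigcup_{i\in I}B_i^\bot$ with $B_i^\bot\cap B_j^\bot=\varnothing$ for all $i\ne j$; $A=\bigcup_{i\in I}A_i^\top$ with $A_i^\top\cap A_j^\top=\varnothing$ for all $i\ne j$; $A=\bigcup_{i\in I}A_i^\bot$ with $A_i^\bot\cap A_j^\bot=\varnothing$ for all $i\ne j$.
   Context: Adjoint triple: for posets $(P_1,\le_1),(P_2,\le_2),(P_3,\le_3)$, maps $\&\colon P_1\times P_2\to P_3$, $\swarrow\colon P_3\times P_2\to P_1$, $\nwarrow\colon P_3\times P_1\to P_2$ with $x\le_1 z\swarrow y \iff x\,\&\,y\le_3 z \iff y\le_2 z\nwarrow x$ for all $x,y,z$. For lower-bounded posets, $\&$ has zero-divisors if there are $x\ne\bot_1$, $y\neq\bot_2$ with $x\,\&\,y=\bot_3$. Standing setting: $(L_1,\preceq_1,\bot_1,\top_1)$ and $(L_2,\preceq_2,\bot_2,\top_2)$ are complete lattices and $(P,\le,\bot,\top)$ is a bounded poset. A multi-adjoint frame consists of adjoint triples $(\&_i,\swarrow^i,\nwarrow_i)$, $i=1,\dots,n$, with respect to $L_1,L_2,P$; a property-oriented frame consists of adjoint triples $(\&^p_j,\swarrow_p^j,\nwarrow^p_j)$, $j=1,\dots,m$,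 with respect to $P,L_2,L_1$; an object-oriented frame consists of adjoint triples $(\&^o_k,\swarrow_o^k,\nwarrow^o_k)$, $k=1,\dots,s$, with respect to $L_1,P,L_2$. All conjunctors $\&_i,\&^p_j,\&^o_k$ have no zero-divisors. A context $(A,B,R,\sigma)$ consists of non-empty sets $A,B$, $R\colon A\times B\to P$, and maps $\sigma,\sigma_p,\sigma_o$ from $A\times B$ to the index sets of the three frames. It is normalized if every $a\in A$ has $b_1,b_2\in B$ with $R(a,b_1)\ne\bot$, $R(a,b_2)=\bot$, and every $b\in B$ has $a_1,a_2\in A$ with $R(a_1,b)\neq\bot$, $R(a_2,b)=\bot$. Fuzzy necessity operators: $g^{\uparrow_N}(a)=\inf\{g(b)\swarrow_o^{\sigma_o(a,b)}R(a,b)\mid b\in B\}$ for $g\in L_2^B$, and $f^{\downarrow^N}(b)=\inf\{f(a)\nwarrow^p_{\sigma_p(a,b)}R(a,b)\mid a\in A\}$ for $f\in L_1^A$. $\mathcal F_N=\{(g,f)\mid g\in L_2^B,\ f\in L_1^A,\ g^{\uparrow_N}=f,\ f^{\downarrow^N}=g\}$. For $X\subseteq B$, $\chi_X\in L_2^B$ takes value $\top_2$ on $X$ and $\bot_2$ elsewhere; for $Y\subseteq A$, $\chi_Y\in L_1^A$ takes value $\top_1$ on $Y$ and $\bot_1$ elsewhere. $\mathcal{FC}=\{(\chi_X,\chi_Y)\in\mathcal F_N\mid \varnothing\ne X\subsetneq B,\ \varnothing\neq Y\subsetneq A\}$. For $(g_i,f_i)\in\mathcal{FC}$: $B_i^\top=\{b\mid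 g_i(b)=\top_2\}$, $B_i^\bot=\{b\mid g_i(b)=\bot_2\}$, $A_i^\top=\{a\mid f_i(a)=\top_1\}$, $A_i^\bot=\{a\mid f_i(a)=\bot_1\}$. *)

theory Defs
  imports Main
begin

definition adjoint_triple ::
  "('p1::order \<Rightarrow> 'p2::order \<Rightarrow> 'p3::order) \<Rightarrow> ('p3 \<Rightarrow> 'p2 \<Rightarrow> 'p1) \<Rightarrow> ('p3 \<Rightarrow> 'p1 \<Rightarrow> 'p2) \<Rightarrow> bool"
  where "adjoint_triple cj sw nw \<longleftrightarrow>
    (\<forall>x y z. (x \<le> sw z y \<longleftrightarrow> cj x y \<le> z) \<and> (cj x y \<le> z \<longleftrightarrow> y \<le> nw z x))"

definition conj_no_zero_div ::
  "('p1::order_bot \<Rightarrow> 'p2::order_bot \<Rightarrow> 'p3::order_bot) \<Rightarrow> bool"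
  where "conj_no_zero_div cj \<longleftrightarrow> (\<forall>x y. x \<noteq> bot \<longrightarrow> y \<noteq> bot \<longrightarrow> cj x y \<noteq> bot)"

definition normalized_context :: "'a set \<Rightarrow> 'b set \<Rightarrow> ('a \<Rightarrow> 'b \<Rightarrow> 'p::order_bot) \<Rightarrow> bool"
  where "normalized_context A B R \<longleftrightarrow>
    (\<forall>a\<in>A. (\<exists>b1\<in>B. R a b1 \<noteq> bot) \<and> (\<exists>b2\<in>B. R a b2 = bot)) \<and>
    (\<forall>b\<in>B. (\<exists>a1\<in>A. R a1 b \<noteq> bot) \<and> (\<exists>a2\<in>A. R a2 b = bot))"

definition up_N ::
  "'b set \<Rightarrow> ('a \<Rightarrow> 'b \<Rightarrow> 'p) \<Rightarrow> ('a \<Rightarrow> 'b \<Rightarrow> nat) \<Rightarrow> (nat \<Rightarrow> 'l2 \<Rightarrow> 'p \<Rightarrow> 'l1::complete_lattice)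
   \<Rightarrow> ('b \<Rightarrow> 'l2) \<Rightarrow> 'a \<Rightarrow> 'l1"
  where "up_N B R sigma_o swO g a = (INF b\<in>B. swO (sigma_o a b) (g b) (R a b))"

definition down_N ::
  "'a set \<Rightarrow> ('a \<Rightarrow> 'b \<Rightarrow> 'p) \<Rightarrow> ('a \<Rightarrow> 'b \<Rightarrow> nat) \<Rightarrow> (nat \<Rightarrow> 'l1 \<Rightarrow> 'p \<Rightarrow> 'l2::complete_lattice)
   \<Rightarrow> ('a \<Rightarrow> 'l1) \<Rightarrow> 'b \<Rightarrow> 'l2"
  where "down_N A R sigma_p nwP f b = (INF a\<in>A. nwP (sigma_p a b) (f a) (R a b))"

text \<open>The set F_N; functions g \<in> L2^B, f \<in> L1^A are compared on their domains B and A.\<close>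
definition FN ::
  "'a set \<Rightarrow> 'b set \<Rightarrow> ('a \<Rightarrow> 'b \<Rightarrow> 'p) \<Rightarrow> ('a \<Rightarrow> 'b \<Rightarrow> nat) \<Rightarrow> ('a \<Rightarrow> 'b \<Rightarrow> nat)
   \<Rightarrow> (nat \<Rightarrow> 'l1::complete_lattice \<Rightarrow> 'p \<Rightarrow> 'l2::complete_lattice) \<Rightarrow> (nat \<Rightarrow> 'l2 \<Rightarrow> 'p \<Rightarrow> 'l1)
   \<Rightarrow> (('b \<Rightarrow> 'l2) \<times> ('a \<Rightarrow> 'l1)) set" where
  "FN A B R sigma_p sigma_o nwP swO =
    {(g, f). (\<forall>a\<in>A. up_N B R sigma_o swO g a = f a) \<and> (\<forall>b\<in>B. down_N A R sigma_p nwP f b = g b)}"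

definition chi :: "'x set \<Rightarrow> 'x \<Rightarrow> 'l::complete_lattice"
  where "chi X x = (if x \<in> X then top else bot)"

definition FC ::
  "'a set \<Rightarrow> 'b set \<Rightarrow> ('a \<Rightarrow> 'b \<Rightarrow> 'p) \<Rightarrow> ('a \<Rightarrow> 'b \<Rightarrow> nat) \<Rightarrow> ('a \<Rightarrow> 'b \<Rightarrow> nat)
   \<Rightarrow> (nat \<Rightarrow> 'l1::complete_lattice \<Rightarrow> 'p \<Rightarrow> 'l2::complete_lattice) \<Rightarrow> (nat \<Rightarrow> 'l2 \<Rightarrow> 'p \<Rightarrow> 'l1)
   \<Rightarrow> (('b \<Rightarrow> 'l2) \<times> ('a \<Rightarrow> 'l1)) set" where
  "FC A B R sigma_p sigma_o nwP swO =
    {(chi X, chi Y) | X Y. X \<noteq> {} \<and> X \<subset> B \<and> Y \<noteq> {} \<and> Y \<subset> A \<and>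
        (chi X, chi Y) \<in> FN A B R sigma_p sigma_o nwP swO}"

definition Btop :: "'b set \<Rightarrow> ('b \<Rightarrow> 'l2::complete_lattice) \<Rightarrow> 'b set"
  where "Btop B g = {b\<in>B. g b = top}"
definition Bbot :: "'b set \<Rightarrow> ('b \<Rightarrow> 'l2::complete_lattice) \<Rightarrow> 'b set"
  where "Bbot B g = {b\<in>B. g b = bot}"
definition Atop :: "'a set \<Rightarrow> ('a \<Rightarrow> 'l1::complete_lattice) \<Rightarrow> 'a set"
  where "Atop A f = {a\<in>A. f a = top}"
definition Abot :: "'a set \<Rightarrow> ('a \<Rightarrow> 'l1::complete_lattice) \<Rightarrow> 'a set"
  where "Abot A f = {a\<in>A. f a = bot}"

end

theory Submission imports Defs begin

lemma INF_topbot: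
  "(INF b\<in>B. (if P b then top else bot) :: 'l::complete_lattice) = (if \<forall>b\<in>B. P b then top else bot)"
proof (cases "\<forall>b\<in>B. P b")
  case True then show ?thesis by (simp add: Inf_top_conv)
next
  case False
  then obtain b where "b \<in> B" "\<not> P b" by blast
  then have "(INF b\<in>B. (if P b then top else bot) :: 'l) \<le> bot"
    by (metis (mono_tags, lifting) INF_lower)
  then have "(INF b\<in>B. (if P b then top else bot) :: 'l) = bot" by (metis bot_unique)
  then show ?thesis using False by metis
qed

lemma sw_val:
  fixes cj :: "'p1::complete_lattice \<Rightarrow> 'p2::order_bot \<Rightarrow> 'p3::complete_lattice"
  assumes "adjoint_triple cj sw nw" "conj_no_zero_div cj"
  shows "sw top y = top" "sw z bot = top" "y \<noteq> bot \<Longrightarrow> sw bot y = bot"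
proof -
  have A: "\<And>x y z. (x \<le> sw z y \<longleftrightarrow> cj x y \<le> z)" "\<And>x y z. (cj x y \<le> z \<longleftrightarrow> y \<le> nw z x)"
    using assms(1) unfolding adjoint_triple_def by auto
  have nz: "\<And>x y. x \<noteq> bot \<Longrightarrow> y \<noteq> bot \<Longrightarrow> cj x y \<noteq> bot" using assms(2) unfolding conj_no_zero_div_def by auto
  have t: "sw top y = top" for y using A(1)[where x=top and y=y and z=top] by (simp add: top_unique)
  have cb: "cj x bot = bot" for x using A(2)[where x=x and y=bot and z=bot] by (simp add: bot_unique)
  have b0: "sw z bot = top" for z using A(1)[where x=top and y=bot and z=z] cb by (simp add: top_unique)
  have bb: "sw bot y = bot" if "y \<noteq> bot" for y
  proof -
    have "cj (sw bot y) y \<le> bot" using A(1)[where x="sw bot y" and y=y and z=bot] by simp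
    then show ?thesis using nz[of "sw bot y" y] that bot_unique by blast
  qed
  show "sw top y = top" "sw z bot = top" "y \<noteq> bot \<Longrightarrow> sw bot y = bot" using t b0 bb by auto
qed

lemma nw_val:
  fixes cj :: "'p1::order_bot \<Rightarrow> 'p2::complete_lattice \<Rightarrow> 'p3::complete_lattice"
  assumes "adjoint_triple cj sw nw" "conj_no_zero_div cj"
  shows "nw top x = top" "nw z bot = top" "x \<noteq> bot \<Longrightarrow> nw bot x = bot"
proof -
  have A: "\<And>x y z. (x \<le> sw z y \<longleftrightarrow> cj x y \<le> z)" "\<And>x y z. (cj x y \<le> z \<longleftrightarrow> y \<le> nw z x)"
    using assms(1) unfolding adjoint_triple_def by auto
  have nz: "\<And>x y. x \<noteq> bot \<Longrightarrow> y \<noteq> bot \<Longrightarrow> cj x y \<noteq> bot" using assms(2) unfolding conj_no_zero_div_def by auto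
  have t: "nw top x = top" for x using A(2)[where x=x and y=top and z=top] by (simp add: top_unique)
  have cb: "cj bot y = bot" for y using A(1)[where x=bot and y=y and z=bot] by (simp add: bot_unique)
  have b0: "nw z bot = top" for z using A(2)[where x=bot and y=top and z=z] cb by (simp add: top_unique)
  have bb: "nw bot x = bot" if "x \<noteq> bot" for x
  proof -
    have "cj x (nw bot x) \<le> bot" using A(2)[where x=x and y="nw bot x" and z=bot] by simp
    then show ?thesis using nz[of x "nw bot x"] that bot_unique by blast
  qed
  show "nw top x = top" "nw z bot = top" "x \<noteq> bot \<Longrightarrow> nw bot x = bot" using t b0 bb by auto
qed


lemma chi_top: "(top::'l::complete_lattice) \<noteq> bot \<Longrightarrow> (chi X x = (top::'l)) = (x \<in> X)"
  by (simp add: chi_def)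
lemma chi_bot: "(top::'l::complete_lattice) \<noteq> bot \<Longrightarrow> (chi X x = (bot::'l)) = (x \<notin> X)"
  by (simp add: chi_def)
lemma Btop_chi: "(top::'l::complete_lattice) \<noteq> bot \<Longrightarrow> Btop B (chi X :: _ \<Rightarrow> 'l) = B \<inter> X"
  by (auto simp: Btop_def chi_top)
lemma Bbot_chi: "(top::'l::complete_lattice) \<noteq> bot \<Longrightarrow> Bbot B (chi X :: _ \<Rightarrow> 'l) = B - X"
  by (auto simp: Bbot_def chi_bot)
lemma Atop_chi: "(top::'l::complete_lattice) \<noteq> bot \<Longrightarrow> Atop B (chi X :: _ \<Rightarrow> 'l) = B \<inter> X"
  by (auto simp: Atop_def chi_top)
lemma Abot_chi: "(top::'l::complete_lattice) \<noteq> bot \<Longrightarrow> Abot B (chi X :: _ \<Rightarrow> 'l) = B - X"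
  by (auto simp: Abot_def chi_bot)

lemma up_chi:
  fixes conjO :: "nat \<Rightarrow> 'l1::complete_lattice \<Rightarrow> 'p::order_bot \<Rightarrow> 'l2::complete_lattice"
  assumes obj_frame: "\<forall>k\<in>{1..s}. adjoint_triple (conjO k) (swO k) (nwO k) \<and> conj_no_zero_div (conjO k)"
    and sigma_o_range: "\<forall>a\<in>A. \<forall>b\<in>B. sigma_o a b \<in> {1..s}"
    and a: "a \<in> A"
  shows "up_N B R sigma_o swO (chi X) a = (if \<forall>b\<in>B. b \<in> X \<or> R a b = bot then top else bot)"
proof -
  have "\<And>b. b \<in> B \<Longrightarrow> swO (sigma_o a b) (chi X b) (R a b) = (if b \<in> X \<or> R a b = bot then top else bot)"
  proof -
    fix b assume b: "b \<in> B"
    then have k: "sigma_o a b \<in> {1..s}" using sigma_o_range a by blast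
    show "swO (sigma_o a b) (chi X b) (R a b) = (if b \<in> X \<or> R a b = bot then top else bot)"
      using sw_val[of "conjO (sigma_o a b)" "swO (sigma_o a b)" "nwO (sigma_o a b)"]
        obj_frame k by (auto simp: chi_def)
  qed
  then show ?thesis unfolding up_N_def by (simp add: INF_topbot cong: INF_cong)
qed

lemma down_chi:
  fixes conjP :: "nat \<Rightarrow> 'p::order_bot \<Rightarrow> 'l2::complete_lattice \<Rightarrow> 'l1::complete_lattice"
  assumes prop_frame: "\<forall>j\<in>{1..m}. adjoint_triple (conjP j) (swP j) (nwP j) \<and> conj_no_zero_div (conjP j)"
    and sigma_p_range: "\<forall>a\<in>A. \<forall>b\<in>B. sigma_p a b \<in> {1..m}"
    and b: "b \<in> B"
  shows "down_N A R sigma_p nwP (chi Y) b = (if \<forall>a\<in>A. a \<in> Y \<or> R a b = bot then top else bot)"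
proof -
  have "\<And>a. a \<in> A \<Longrightarrow> nwP (sigma_p a b) (chi Y a) (R a b) = (if a \<in> Y \<or> R a b = bot then top else bot)"
  proof -
    fix a assume a: "a \<in> A"
    then have k: "sigma_p a b \<in> {1..m}" using sigma_p_range b by blast
    show "nwP (sigma_p a b) (chi Y a) (R a b) = (if a \<in> Y \<or> R a b = bot then top else bot)"
      using nw_val[of "conjP (sigma_p a b)" "swP (sigma_p a b)" "nwP (sigma_p a b)"]
        prop_frame k by (auto simp: chi_def)
  qed
  then show ?thesis unfolding down_N_def by (simp add: INF_topbot cong: INF_cong)
qed


theorem mainTheorem6:
  fixes A :: "'a set" and B :: "'b set" and R :: "'a \<Rightarrow> 'b \<Rightarrow> 'p::{order_bot,order_top}"
    and n m s :: nat
    and conjM :: "nat \<Rightarrow> 'l1::complete_lattice \<Rightarrow> 'l2::complete_lattice \<Rightarrow> 'p"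
    and swM :: "nat \<Rightarrow> 'p \<Rightarrow> 'l2 \<Rightarrow> 'l1" and nwM :: "nat \<Rightarrow> 'p \<Rightarrow> 'l1 \<Rightarrow> 'l2"
    and conjP :: "nat \<Rightarrow> 'p \<Rightarrow> 'l2 \<Rightarrow> 'l1"
    and swP :: "nat \<Rightarrow> 'l1 \<Rightarrow> 'l2 \<Rightarrow> 'p" and nwP :: "nat \<Rightarrow> 'l1 \<Rightarrow> 'p \<Rightarrow> 'l2"
    and conjO :: "nat \<Rightarrow> 'l1 \<Rightarrow> 'p \<Rightarrow> 'l2"
    and swO :: "nat \<Rightarrow> 'l2 \<Rightarrow> 'p \<Rightarrow> 'l1" and nwO :: "nat \<Rightarrow> 'l2 \<Rightarrow> 'l1 \<Rightarrow> 'p"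
    and sigma sigma_p sigma_o :: "'a \<Rightarrow> 'b \<Rightarrow> nat"
  assumes multi_frame: "\<forall>i\<in>{1..n}. adjoint_triple (conjM i) (swM i) (nwM i) \<and> conj_no_zero_div (conjM i)"
    and prop_frame: "\<forall>j\<in>{1..m}. adjoint_triple (conjP j) (swP j) (nwP j) \<and> conj_no_zero_div (conjP j)"
    and obj_frame: "\<forall>k\<in>{1..s}. adjoint_triple (conjO k) (swO k) (nwO k) \<and> conj_no_zero_div (conjO k)"
    and A_ne: "A \<noteq> {}" and B_ne: "B \<noteq> {}"
    and sigma_range: "\<forall>a\<in>A. \<forall>b\<in>B. sigma a b \<in> {1..n}"
    and sigma_p_range: "\<forall>a\<in>A. \<forall>b\<in>B. sigma_p a b \<in> {1..m}"
    and sigma_o_range: "\<forall>a\<in>A. \<forall>b\<in>B. sigma_o a b \<in> {1..s}"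
    and normalized: "normalized_context A B R"
    and FC_ne: "FC A B R sigma_p sigma_o nwP swO \<noteq> {}"
  shows "\<exists>I. I \<subseteq> FC A B R sigma_p sigma_o nwP swO \<and>
    B = (\<Union>(g, f)\<in>I. Btop B g) \<and>
    (\<forall>(g, f)\<in>I. \<forall>(g', f')\<in>I. (g, f) \<noteq> (g', f') \<longrightarrow> Btop B g \<inter> Btop B g' = {}) \<and>
    B = (\<Union>(g, f)\<in>I. Bbot B g) \<and>
    (\<forall>(g, f)\<in>I. \<forall>(g', f')\<in>I. (g, f) \<noteq> (g', f') \<longrightarrow> Bbot B g \<inter> Bbot B g' = {}) \<and>
    A = (\<Union>(g, f)\<in>I. Atop A f) \<and>
    (\<forall>(g, f)\<in>I. \<forall>(g', f')\<in>I. (g, f) \<noteq> (g', f') \<longrightarrow> Atop A f \<inter> Atop A f' = {}) \<and>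
    A = (\<Union>(g, f)\<in>I. Abot A f) \<and>
    (\<forall>(g, f)\<in>I. \<forall>(g', f')\<in>I. (g, f) \<noteq> (g', f') \<longrightarrow> Abot A f \<inter> Abot A f' = {})"
proof -
  obtain X Y where XY: "X \<noteq> {}" "X \<subset> B" "Y \<noteq> {}" "Y \<subset> A"
    "(chi X, chi Y) \<in> FN A B R sigma_p sigma_o nwP swO"
    and p_in: "(chi X, chi Y) \<in> FC A B R sigma_p sigma_o nwP swO"
    using FC_ne unfolding FC_def by blast
  have up: "\<And>X a. a \<in> A \<Longrightarrow> up_N B R sigma_o swO (chi X) a = (if \<forall>b\<in>B. b \<in> X \<or> R a b = bot then top else bot)"
    by (rule up_chi[OF obj_frame sigma_o_range])
  have down: "\<And>Y b. b \<in> B \<Longrightarrow> down_N A R sigma_p nwP (chi Y) b = (if \<forall>a\<in>A. a \<in> Y \<or> R a b = bot then top else bot)"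
    by (rule down_chi[OF prop_frame sigma_p_range])
  have FN1: "\<forall>a\<in>A. (if \<forall>b\<in>B. b \<in> X \<or> R a b = bot then top else bot) = (chi Y a :: 'l1)"
    "\<forall>b\<in>B. (if \<forall>a\<in>A. a \<in> Y \<or> R a b = bot then top else bot) = (chi X b :: 'l2)"
    using XY(5) up down unfolding FN_def by auto
  obtain a0 b0 where ab0: "a0 \<in> A" "b0 \<in> B" "R a0 b0 \<noteq> bot"
    using normalized A_ne unfolding normalized_context_def by blast
  have k0: "sigma_o a0 b0 \<in> {1..s}" "sigma_p a0 b0 \<in> {1..m}" using ab0 sigma_o_range sigma_p_range by auto
  have triv12: "(top::'l1) = bot" if "(top::'l2) = bot"
  proof -
    have "swO (sigma_o a0 b0) bot (R a0 b0) = bot"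
      using sw_val(3)[of "conjO (sigma_o a0 b0)" "swO (sigma_o a0 b0)" "nwO (sigma_o a0 b0)"] obj_frame k0 ab0 by auto
    moreover have "swO (sigma_o a0 b0) top (R a0 b0) = top"
      using sw_val(1)[of "conjO (sigma_o a0 b0)" "swO (sigma_o a0 b0)" "nwO (sigma_o a0 b0)"] obj_frame k0 ab0 by auto
    ultimately show ?thesis using that by simp
  qed
  have triv21: "(top::'l2) = bot" if "(top::'l1) = bot"
  proof -
    have "nwP (sigma_p a0 b0) bot (R a0 b0) = bot"
      using nw_val(3)[of "conjP (sigma_p a0 b0)" "swP (sigma_p a0 b0)" "nwP (sigma_p a0 b0)"] prop_frame k0 ab0 by auto
    moreover have "nwP (sigma_p a0 b0) top (R a0 b0) = top"
      using nw_val(1)[of "conjP (sigma_p a0 b0)" "swP (sigma_p a0 b0)" "nwP (sigma_p a0 b0)"] prop_frame k0 ab0 by auto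
    ultimately show ?thesis using that by simp
  qed
  show ?thesis
  proof (cases "(top::'l1) = bot \<or> (top::'l2) = bot")
    case True
    then have t1: "(top::'l1) = bot" and t2: "(top::'l2) = bot" using triv12 triv21 by auto
    have e1: "\<And>x::'l1. x = top" using t1 by (metis bot_least top_unique)
    have e2: "\<And>x::'l2. x = top" using t2 by (metis bot_least top_unique)
    have h1: "\<And>g. Btop B (g::'b \<Rightarrow> 'l2) = B" unfolding Btop_def using e2 by blast
    have h2: "\<And>g. Bbot B (g::'b \<Rightarrow> 'l2) = B" unfolding Bbot_def using e2 t2 by (metis (mono_tags, lifting) Collect_cong Collect_mem_eq)
    have h3: "\<And>f. Atop A (f::'a \<Rightarrow> 'l1) = A" unfolding Atop_def using e1 by blast
    have h4: "\<And>f. Abot A (f::'a \<Rightarrow> 'l1) = A" unfolding Abot_def using e1 t1 by (metis (mono_tags, lifting) Collect_cong Collect_mem_eq)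
    note h = h1 h2 h3 h4
    show ?thesis
      by (intro exI[of _ "{(chi X, chi Y)}"]) (use p_in h in auto)
  next
    case False
    then have n1: "(top::'l1) \<noteq> bot" and n2: "(top::'l2) \<noteq> bot" by auto
    have Yc: "\<forall>a\<in>A. a \<in> Y \<longleftrightarrow> (\<forall>b\<in>B. b \<in> X \<or> R a b = bot)"
      using FN1(1) n1 by (auto simp: chi_def split: if_splits)
    have Xc: "\<forall>b\<in>B. b \<in> X \<longleftrightarrow> (\<forall>a\<in>A. a \<in> Y \<or> R a b = bot)"
      using FN1(2) n2 by (auto simp: chi_def split: if_splits)
    have norm1: "\<forall>a\<in>A. \<exists>b\<in>B. R a b \<noteq> bot" "\<forall>b\<in>B. \<exists>a\<in>A. R a b \<noteq> bot"
      using normalized unfolding normalized_context_def by auto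
    have Yc': "\<forall>a\<in>A. a \<in> A - Y \<longleftrightarrow> (\<forall>b\<in>B. b \<in> B - X \<or> R a b = bot)"
    proof
      fix a assume a: "a \<in> A"
      show "a \<in> A - Y \<longleftrightarrow> (\<forall>b\<in>B. b \<in> B - X \<or> R a b = bot)"
      proof
        assume "a \<in> A - Y"
        then show "\<forall>b\<in>B. b \<in> B - X \<or> R a b = bot" using Xc a by auto
      next
        assume h: "\<forall>b\<in>B. b \<in> B - X \<or> R a b = bot"
        show "a \<in> A - Y"
        proof
          show "a \<in> A" using a .
          show "a \<notin> Y"
          proof
            assume "a \<in> Y"
            then have "\<forall>b\<in>B. b \<in> X \<or> R a b = bot" using Yc a by auto
            then have "\<forall>b\<in>B. R a b = bot" using h by auto
            then show False using norm1(1) a by auto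
          qed
        qed
      qed
    qed
    have Xc': "\<forall>b\<in>B. b \<in> B - X \<longleftrightarrow> (\<forall>a\<in>A. a \<in> A - Y \<or> R a b = bot)"
    proof
      fix b assume b: "b \<in> B"
      show "b \<in> B - X \<longleftrightarrow> (\<forall>a\<in>A. a \<in> A - Y \<or> R a b = bot)"
      proof
        assume "b \<in> B - X"
        then show "\<forall>a\<in>A. a \<in> A - Y \<or> R a b = bot" using Yc b by auto
      next
        assume h: "\<forall>a\<in>A. a \<in> A - Y \<or> R a b = bot"
        show "b \<in> B - X"
        proof
          show "b \<in> B" using b .
          show "b \<notin> X"
          proof
            assume "b \<in> X"
            then have "\<forall>a\<in>A. a \<in> Y \<or> R a b = bot" using Xc b by auto
            then have "\<forall>a\<in>A. R a b = bot" using h by auto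
            then show False using norm1(2) b by auto
          qed
        qed
      qed
    qed
    have FN2: "(chi (B - X), chi (A - Y)) \<in> FN A B R sigma_p sigma_o nwP swO"
    proof -
      have "\<forall>a\<in>A. up_N B R sigma_o swO (chi (B - X)) a = chi (A - Y) a"
      proof
        fix a assume a: "a \<in> A"
        show "up_N B R sigma_o swO (chi (B - X)) a = chi (A - Y) a"
          unfolding up[OF a] chi_def using Yc' a by (metis (no_types))
      qed
      moreover have "\<forall>b\<in>B. down_N A R sigma_p nwP (chi (A - Y)) b = chi (B - X) b"
      proof
        fix b assume b: "b \<in> B"
        show "down_N A R sigma_p nwP (chi (A - Y)) b = chi (B - X) b"
          unfolding down[OF b] chi_def using Xc' b by (metis (no_types))
      qed
      ultimately show ?thesis unfolding FN_def by simp
    qed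
    have q_in: "(chi (B - X), chi (A - Y)) \<in> FC A B R sigma_p sigma_o nwP swO"
      unfolding FC_def using FN2 XY by blast
    obtain x where x: "x \<in> X" using XY by blast
    have neq: "(chi X :: 'b \<Rightarrow> 'l2) \<noteq> chi (B - X)"
    proof
      assume "(chi X :: 'b \<Rightarrow> 'l2) = chi (B - X)"
      then have "(chi X x :: 'l2) = chi (B - X) x" by simp
      then show False using x n2 by (simp add: chi_def)
    qed
    show ?thesis
      apply (intro exI[of _ "{(chi X, chi Y), (chi (B - X), chi (A - Y))}"])
      using p_in q_in XY neq
      by (auto simp: Btop_chi[OF n2] Bbot_chi[OF n2] Atop_chi[OF n1] Abot_chi[OF n1])
  qed
qed

end
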